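(* Let $N\in\mathbb N$ (with $N\ge 2$ when $R_N=D_N$), $r>0$, $0<t_\ast<\infty$ and $t\in(0,t_\ast)$. For all $j,k\in\{1,\dots,N\}$, \[ \int_0^{2\pi r}\overline{M^{A_N}_j(x,t_\ast-t)}\,M^{A_N}_k(x,t)\,dx=m^{A_N}_j(t_\ast)\,\delta_{jk}, \] and, for $R_N\in\{B_N,B_N^\vee,C_N,C_N^\vee,BC_N,D_N\}$, \[ \int_0^{\pi r}\overline{M^{R_N}_j(x,t_\ast-t)}\,M^{R_N}_k(x,t)\,dx=m^{R_N}_j(t_\ast)\,\delta_{jk}, \] where the constants $m^{R_N}_j(t_\ast)$ are: for $R_N\in\{A_N,C_N,C_N^\vee,BC_N\}$, $m^{R_N}_j(t_\ast)=2\pi r\,\vartheta_2\big(\mathcal N^{R_N}J^{R_N}(j)\tau(t_\ast);(\mathcal N^{R_N})^2\tau(t_\ast)\big)$ for all $j$; for $R_N\in\{B_N,B_N^\vee\}$, $m^{R_N}_1(t_\ast)=4\pi r\,\vartheta_2\big(0;(\mathcal N^{R_N})^2\tau(t_\ast)\big)$ and $m^{R_N}_j(t_\ast)=2\pi r\,\vartheta_2\big(\mathcal N^{R_N}J^{R_N}(j)\tau(t_\ast);(\mathcal N^{R_N})^2\tau(t_\ast)\big)$ for $2\le j\le N$; for $D_N$, $m^{D_N}_1(t_\ast)=4\pi r\,\vartheta_2\big(0;(\mathcal N^{D_N})^2\tau(t_\ast)\big)$, $m^{D_N}_j(t_\ast)=2\pi r\,\vartheta_2\big(\mathcal N^{D_N}J^{D_N}(j)\tau(t_\ast);(\mathcal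 N^{D_N})^2\tau(t_\ast)\big)$ for $2\le j\le N-1$, and $m^{D_N}_N(t_\ast)=4\pi r\,\vartheta_2\big(\mathcal N^{D_N}(N-1)\tau(t_\ast);(\mathcal N^{D_N})^2\tau(t_\ast)\big)$.
   Context: Jacobi theta functions: for $v\in\mathbb C$, $\tau\in\mathbb H=\{\tau\in\mathbb C:\Im\tau>0\}$, with $z=e^{\pi i v}$, $q=e^{\pi i\tau}$, set $\vartheta_0(v;\tau)=\sum_{n\in\mathbb Z}(-1)^nq^{n^2}z^{2n}$, $\vartheta_1(v;\tau)=i\sum_{n\in\mathbb Z}(-1)^nq^{(n-1/2)^2}z^{2n-1}$, $\vartheta_2(v;\tau)=\sum_{n\in\mathbb Z}q^{(n-1/2)^2}z^{2n-1}$, $\vartheta_3(v;\tau)=\sum_{n\in\mathbb Z}q^{n^2}z^{2n}$. For $\sigma\in\mathbb R$, $z\in\mathbb C$, $\tau\in\mathbb H$ define $\Theta^A(\sigma,z,\tau)=e^{2\pi i\sigma z}\vartheta_2(\sigma\tau+z;\tau)$, $\Theta^B(\sigma,z,\tau)=e^{2\pi i\sigma z}\vartheta_1(\sigma\tau+z;\tau)-e^{-2\pi i\sigma z}\vartheta_1(\sigma\tau-z;\tau)$, $\Theta^C(\sigma,z,\tau)=e^{2\pi i\sigma z}\vartheta_2(\sigma\tau+z;\tau)-e^{-2\pi i\sigma z}\vartheta_2(\sigma\tau-z;\tau)$, $\Theta^D(\sigma,z,\tau)=e^{2\pi i\sigma z}\vartheta_2(\sigma\tau+z;\tau)+e^{-2\pi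 i\sigma z}\vartheta_2(\sigma\tau-z;\tau)$. The symbol $R_N$ ranges over the seven types $A_N,B_N,B_N^\vee,C_N,C_N^\vee,BC_N,D_N$. Set $\sharp(R_N)=A$ for $A_N$; $=B$ for $B_N,B_N^\vee$; $=C$ for $C_N,C_N^\vee,BC_N$; $=D$ for $D_N$. Set $J^{R_N}(j)=j-1/2$ for $A_N,C_N^\vee$; $=j-1$ for $B_N,B_N^\vee,D_N$; $=j$ for $C_N,BC_N$. Set $\mathcal N^{A_N}=N$, $\mathcal N^{B_N}=2N-1$, $\mathcal N^{B_N^\vee}=\mathcal N^{C_N^\vee}=2N$, $\mathcal N^{C_N}=2(N+1)$, $\mathcal N^{BC_N}=2N+1$, $\mathcal N^{D_N}=2(N-1)$. Fix $r>0$ and put $\xi(x)=x/(2\pi r)$, $\tau(t)=it/(2\pi r^2)$. For $x\in\mathbb R$, $t>0$, $j=1,\dots,N$, define $M^{R_N}_j(x,t)=\Theta^{\sharp(R_N)}\big(J^{R_N}(j)/\mathcal N^{R_N},\ \mathcal N^{R_N}\xi(x),\ (\mathcal N^{R_N})^2\tau(t)\big)$. The overline denotes complex conjugation. *)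

theory Defs
  imports "HOL-Analysis.Analysis"
begin

text \<open>Jacobi theta functions, with z = exp(pi i v), q = exp(pi i tau), and
  q^a read as exp(pi i tau a). Sums over all integers n.\<close>

definition theta1 :: "complex \<Rightarrow> complex \<Rightarrow> complex" where
  "theta1 v tau = \<i> * (\<Sum>\<^sub>\<infinity>n::int.
      (if even n then 1 else -1) * exp (pi * \<i> * tau * (of_int n - 1/2)^2)
        * exp (pi * \<i> * v * (2 * of_int n - 1)))"

definition theta2 :: "complex \<Rightarrow> complex \<Rightarrow> complex" where
  "theta2 v tau = (\<Sum>\<^sub>\<infinity>n::int.
      exp (pi * \<i> * tau * (of_int n - 1/2)^2) * exp (pi * \<i> * v * (2 * of_int n - 1)))"

definition ThetaA :: "real \<Rightarrow> complex \<Rightarrow> complex \<Rightarrow> complex" where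
  "ThetaA \<sigma> z tau = exp (2 * pi * \<i> * \<sigma> * z) * theta2 (\<sigma> * tau + z) tau"

definition ThetaB :: "real \<Rightarrow> complex \<Rightarrow> complex \<Rightarrow> complex" where
  "ThetaB \<sigma> z tau = exp (2 * pi * \<i> * \<sigma> * z) * theta1 (\<sigma> * tau + z) tau
                     - exp (- 2 * pi * \<i> * \<sigma> * z) * theta1 (\<sigma> * tau - z) tau"

definition ThetaC :: "real \<Rightarrow> complex \<Rightarrow> complex \<Rightarrow> complex" where
  "ThetaC \<sigma> z tau = exp (2 * pi * \<i> * \<sigma> * z) * theta2 (\<sigma> * tau + z) tau
                     - exp (- 2 * pi * \<i> * \<sigma> * z) * theta2 (\<sigma> * tau - z) tau"

definition ThetaD :: "real \<Rightarrow> complex \<Rightarrow> complex \<Rightarrow> complex" where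
  "ThetaD \<sigma> z tau = exp (2 * pi * \<i> * \<sigma> * z) * theta2 (\<sigma> * tau + z) tau
                     + exp (- 2 * pi * \<i> * \<sigma> * z) * theta2 (\<sigma> * tau - z) tau"

datatype rtype = RA | RB | RBv | RC | RCv | RBC | RD

datatype sharp_type = SA | SB | SC | SD

fun sharp :: "rtype \<Rightarrow> sharp_type" where
  "sharp RA = SA" | "sharp RB = SB" | "sharp RBv = SB"
| "sharp RC = SC" | "sharp RCv = SC" | "sharp RBC = SC" | "sharp RD = SD"

fun Theta_of :: "sharp_type \<Rightarrow> real \<Rightarrow> complex \<Rightarrow> complex \<Rightarrow> complex" where
  "Theta_of SA = ThetaA" | "Theta_of SB = ThetaB"
| "Theta_of SC = ThetaC" | "Theta_of SD = ThetaD"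

fun Jfun :: "rtype \<Rightarrow> nat \<Rightarrow> real" where
  "Jfun RA j = real j - 1/2" | "Jfun RCv j = real j - 1/2"
| "Jfun RB j = real j - 1" | "Jfun RBv j = real j - 1" | "Jfun RD j = real j - 1"
| "Jfun RC j = real j" | "Jfun RBC j = real j"

fun Ncal :: "rtype \<Rightarrow> nat \<Rightarrow> real" where
  "Ncal RA N = real N"
| "Ncal RB N = 2 * real N - 1"
| "Ncal RBv N = 2 * real N"
| "Ncal RCv N = 2 * real N"
| "Ncal RC N = 2 * (real N + 1)"
| "Ncal RBC N = 2 * real N + 1"
| "Ncal RD N = 2 * (real N - 1)"

definition xi :: "real \<Rightarrow> real \<Rightarrow> real" where
  "xi r x = x / (2 * pi * r)"

definition tauf :: "real \<Rightarrow> real \<Rightarrow> complex" where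
  "tauf r t = \<i> * t / (2 * pi * r^2)"

definition M :: "rtype \<Rightarrow> nat \<Rightarrow> real \<Rightarrow> nat \<Rightarrow> real \<Rightarrow> real \<Rightarrow> complex" where
  "M R N r j x t = Theta_of (sharp R) (Jfun R j / Ncal R N)
      (of_real (Ncal R N * xi r x)) ((of_real (Ncal R N))^2 * tauf r t)"

definition mconst :: "rtype \<Rightarrow> nat \<Rightarrow> real \<Rightarrow> nat \<Rightarrow> real \<Rightarrow> complex" where
  "mconst R N r j ts =
     (let n = Ncal R N; tt = (of_real n)^2 * tauf r ts;
          generic = 2 * pi * r * theta2 (of_real (n * Jfun R j) * tauf r ts) tt
      in if R \<in> {RB, RBv, RD} \<and> j = 1 then 4 * pi * r * theta2 0 tt
         else if R = RD \<and> j = N then 4 * pi * r * theta2 (of_real (n * (real N - 1)) * tauf r ts) tt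
         else generic)"

definition Lint :: "rtype \<Rightarrow> real \<Rightarrow> real" where
  "Lint R r = (if R = RA then 2 * pi * r else pi * r)"

end

theory Submission
  imports Defs
begin

lemma has_sum_seq:
  assumes "(f has_sum s) UNIV" "filterlim F (finite_subsets_at_top UNIV) sequentially"
  shows "(\<lambda>k. sum f (F k)) \<longlonglongrightarrow> s"
  using filterlim_compose[OF assms(1)[unfolded has_sum_def] assms(2)] by simp

lemma fl_int2: "filterlim (\<lambda>k::nat. {-int k..int k} \<times> {-int k..int k}) (finite_subsets_at_top UNIV) sequentially"
proof (subst filterlim_finite_subsets_at_top, intro allI impI)
  fix X :: "(int\<times>int) set" assume X: "finite X \<and> X \<subseteq> UNIV"
  obtain K where K: "\<forall>p\<in>X. \<bar>fst p\<bar> \<le> K \<and> \<bar>snd p\<bar> \<le> K"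
  proof -
    have fX: "finite ((\<lambda>p. max \<bar>fst p\<bar> \<bar>snd p\<bar>) ` X)" using X by auto
    have "\<forall>y\<in>(\<lambda>p. max \<bar>fst p\<bar> \<bar>snd p\<bar>) ` X. y \<le> Max (insert 0 ((\<lambda>p. max \<bar>fst p\<bar> \<bar>snd p\<bar>) ` X))"
      using fX by auto
    then show ?thesis using that by fastforce
  qed
  show "\<forall>\<^sub>F k in sequentially. finite ({-int k..int k} \<times> {-int k..int k}) \<and> X \<subseteq> {-int k..int k} \<times> {-int k..int k} \<and> {-int k..int k} \<times> {-int k..int k} \<subseteq> UNIV"
    using eventually_ge_at_top[of "nat K"] 
    by eventually_elim (use K in force)
qed

lemma integral_infsum:
  fixes f :: "'i \<Rightarrow> real \<Rightarrow> complex" and F :: "nat \<Rightarrow> 'i set"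
  assumes lim: "filterlim F (finite_subsets_at_top UNIV) sequentially"
    and cont: "\<And>i. continuous_on {a..b} (f i)"
    and bnd: "\<And>i x. x \<in> {a..b} \<Longrightarrow> norm (f i x) \<le> B i"
    and summ: "B summable_on UNIV"
  shows "integral {a..b} (\<lambda>x. \<Sum>\<^sub>\<infinity>i. f i x) = (\<Sum>\<^sub>\<infinity>i. integral {a..b} (f i))"
proof -
  have Bnn: "B i \<ge> 0" if "a \<le> b" for i using bnd[of a i] that by (meson atLeastAtMost_iff norm_ge_zero order_trans order_refl)
  show ?thesis
  proof (cases "a \<le> b")
    case False then show ?thesis by simp
  next
    case ab: True
    have fs: "(\<lambda>i. f i x) summable_on UNIV" if "x \<in> {a..b}" for x
      by (rule abs_summable_summable, rule summable_on_comparison_test[OF summ]) (use bnd that Bnn[OF ab] in auto)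
    have int: "f i integrable_on {a..b}" for i using cont integrable_continuous_interval by blast
    have conv: "(\<lambda>k. sum (\<lambda>i. f i x) (F k)) \<longlonglongrightarrow> (\<Sum>\<^sub>\<infinity>i. f i x)" if "x \<in> {a..b}" for x
      by (rule has_sum_seq[OF _ lim]) (use fs[OF that] in auto)
    have fin: "\<forall>\<^sub>F k in sequentially. finite (F k)" using lim unfolding filterlim_finite_subsets_at_top by auto
    obtain k0 where k0: "\<And>k. k \<ge> k0 \<Longrightarrow> finite (F k)" using fin unfolding eventually_sequentially by auto
    define G where "G k = F (k + k0)" for k
    have Gfin: "finite (G k)" for k using k0 unfolding G_def by auto
    have limG: "filterlim G (finite_subsets_at_top UNIV) sequentially" unfolding G_def
      using lim by (rule filterlim_compose) (simp add: filterlim_add_const_nat_at_top)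
    have convG: "(\<lambda>k. sum (\<lambda>i. f i x) (G k)) \<longlonglongrightarrow> (\<Sum>\<^sub>\<infinity>i. f i x)" if "x \<in> {a..b}" for x
      by (rule has_sum_seq[OF _ limG]) (use fs[OF that] in auto)
    have le: "norm (sum (\<lambda>i. f i x) (G k)) \<le> (\<Sum>\<^sub>\<infinity>i. B i)" if "x \<in> {a..b}" for x k
    proof -
      have "norm (sum (\<lambda>i. f i x) (G k)) \<le> sum B (G k)" by (rule sum_norm_le) (use bnd that in auto)
      also have "\<dots> = (\<Sum>\<^sub>\<infinity>i\<in>G k. B i)" using Gfin by simp
      also have "\<dots> \<le> (\<Sum>\<^sub>\<infinity>i. B i)" by (rule infsum_mono_neutral) (use summ Gfin Bnn[OF ab] in auto)
      finally show ?thesis .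
    qed
    have DC: "(\<lambda>k. integral {a..b} (\<lambda>x. sum (\<lambda>i. f i x) (G k))) \<longlonglongrightarrow> integral {a..b} (\<lambda>x. \<Sum>\<^sub>\<infinity>i. f i x)"
      by (rule dominated_convergence(2)[where h="\<lambda>_. (\<Sum>\<^sub>\<infinity>i. B i)"])
         (use int le convG in \<open>auto intro!: integrable_sum simp: Gfin\<close>)
    have ib: "norm (integral {a..b} (f i)) \<le> B i * (b - a)" for i
      using has_integral_bound_real[OF Bnn[OF ab] finite.emptyI integrable_integral[OF int[of i]]] bnd ab by auto
    have isum: "(\<lambda>i. integral {a..b} (f i)) summable_on UNIV"
      by (rule abs_summable_summable, rule summable_on_comparison_test[OF summable_on_cmult_left[OF summ, of "b-a"]]) (use ib in auto)
    have conv2: "(\<lambda>k. sum (\<lambda>i. integral {a..b} (f i)) (G k)) \<longlonglongrightarrow> (\<Sum>\<^sub>\<infinity>i. integral {a..b} (f i))"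
      by (rule has_sum_seq[OF _ limG]) (use isum in auto)
    have "(\<lambda>k. integral {a..b} (\<lambda>x. sum (\<lambda>i. f i x) (G k))) = (\<lambda>k. sum (\<lambda>i. integral {a..b} (f i)) (G k))"
      by (rule ext, rule integral_sum) (use Gfin int in auto)
    with DC conv2 show ?thesis using LIMSEQ_unique by metis
  qed
qed

lemma infsum_prod:
  fixes a b :: "'i \<Rightarrow> complex"
  assumes na: "(\<lambda>m. norm (a m)) summable_on UNIV" and nb: "(\<lambda>m. norm (b m)) summable_on UNIV"
  shows "(\<lambda>p. norm (a (fst p) * b (snd p))) summable_on UNIV"
    and "(\<Sum>\<^sub>\<infinity>m. a m) * (\<Sum>\<^sub>\<infinity>m. b m) = (\<Sum>\<^sub>\<infinity>p. a (fst p) * b (snd p))"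
proof -
  have hs: "((\<lambda>y. norm (a x) * norm (b y)) has_sum (norm (a x) * (\<Sum>\<^sub>\<infinity>y. norm (b y)))) UNIV" for x
    by (rule has_sum_cmult_right, rule has_sum_infsum[OF nb])
  have "(\<lambda>p. norm (a (fst p)) * norm (b (snd p))) summable_on (UNIV \<times> UNIV)"
    by (rule summable_on_SigmaI[where g="\<lambda>x. norm (a x) * (\<Sum>\<^sub>\<infinity>y. norm (b y))"])
       (use hs summable_on_cmult_left[OF na] in auto)
  then show ns: "(\<lambda>p. norm (a (fst p) * b (snd p))) summable_on UNIV" by (simp add: norm_mult)
  have sa: "a summable_on UNIV" using na abs_summable_summable by blast
  have sb: "b summable_on UNIV" using nb abs_summable_summable by blast
  have sp: "(\<lambda>(x, y). a x * b y) summable_on (UNIV \<times> UNIV)"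
    using abs_summable_summable[OF ns] by (simp add: split_def)
  have "(\<Sum>\<^sub>\<infinity>p. a (fst p) * b (snd p)) = (\<Sum>\<^sub>\<infinity>(x,y)\<in>UNIV \<times> UNIV. a x * b y)"
    by (simp add: split_def)
  also have "\<dots> = (\<Sum>\<^sub>\<infinity>x. \<Sum>\<^sub>\<infinity>y. a x * b y)"
    by (rule infsum_Sigma'_banach[symmetric]) (use sp in simp)
  also have "\<dots> = (\<Sum>\<^sub>\<infinity>x. a x * (\<Sum>\<^sub>\<infinity>y. b y))"
    by (rule infsum_cong, rule infsum_cmult_right) (use sb in auto)
  also have "\<dots> = (\<Sum>\<^sub>\<infinity>x. a x) * (\<Sum>\<^sub>\<infinity>y. b y)"
    by (rule infsum_cmult_left) (use sa in auto)
  finally show "(\<Sum>\<^sub>\<infinity>m. a m) * (\<Sum>\<^sub>\<infinity>m. b m) = (\<Sum>\<^sub>\<infinity>p. a (fst p) * b (snd p))" by simp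
qed

definition cc :: "real \<Rightarrow> real \<Rightarrow> int \<Rightarrow> real" where
  "cc \<sigma> \<kappa> m = exp (-(pi * \<kappa> * ((of_int m - 1/2 + \<sigma>)^2 - \<sigma>^2)))"

lemma summable_exp_abs: "(\<lambda>m::int. exp (- \<bar>real_of_int m\<bar>)) summable_on UNIV"
proof -
  have g: "(\<lambda>n::nat. exp (- real n)) summable_on UNIV"
  proof (rule norm_summable_imp_summable_on)
    have "summable (\<lambda>n::nat. exp (-1::real) ^ n)" using summable_geometric[of "exp (-1::real)"] by simp
    moreover have "exp (-1::real) ^ n = norm (exp (- real n))" for n
      by (subst exp_of_nat_mult[symmetric]) simp
    ultimately show "summable (\<lambda>n. norm (exp (- real n)))" by simp
  qed
  have 1: "(\<lambda>m::int. exp (- \<bar>real_of_int m\<bar>)) summable_on range int"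
    by (subst summable_on_reindex) (use g in \<open>auto simp: o_def\<close>)
  have 2: "(\<lambda>m::int. exp (- \<bar>real_of_int m\<bar>)) summable_on range (\<lambda>n. - int n)"
    by (subst summable_on_reindex) (use g in \<open>auto simp: o_def inj_on_def\<close>)
  have "UNIV = range int \<union> range (\<lambda>n. - int n)"
  proof (rule set_eqI)
    fix m :: int
    show "m \<in> UNIV \<longleftrightarrow> m \<in> range int \<union> range (\<lambda>n. - int n)"
    proof (cases "m \<ge> 0")
      case True then have "m = int (nat m)" by simp
      then show ?thesis by blast
    next
      case False then have "m = - int (nat (-m))" by simp
      then show ?thesis by blast
    qed
  qed
  then show ?thesis using summable_on_union[OF 1 2] by simp
qed

lemma cc_pos: "cc \<sigma> \<kappa> m > 0" by (simp add: cc_def)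

lemma cc_summable:
  assumes "\<kappa> > 0" shows "cc \<sigma> \<kappa> summable_on UNIV"
proof -
  define a where "a = pi * \<kappa>"
  have a: "a > 0" using assms by (simp add: a_def)
  define K where "K = \<bar>1/2 - \<sigma>\<bar> + 1/(4*a) + a * \<sigma>^2"
  have le: "cc \<sigma> \<kappa> m \<le> exp K * exp (- \<bar>real_of_int m\<bar>)" for m
  proof -
    define y where "y = real_of_int m - 1/2 + \<sigma>"
    have "0 \<le> (2*a*\<bar>y\<bar> - 1)^2" by simp
    then have "4*a*(a*y^2 - \<bar>y\<bar>) + 1 \<ge> 0" by (simp add: power2_eq_square algebra_simps abs_mult_self_eq)
    then have h1: "a*y^2 \<ge> \<bar>y\<bar> - 1/(4*a)" using a by (simp add: field_simps)
    have h2: "\<bar>real_of_int m\<bar> \<le> \<bar>y\<bar> + \<bar>1/2 - \<sigma>\<bar>" unfolding y_def by linarith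
    have "- (a * (y^2 - \<sigma>^2)) \<le> K + (- \<bar>real_of_int m\<bar>)" using h1 h2 unfolding K_def by (simp add: algebra_simps)
    then show ?thesis unfolding cc_def a_def[symmetric] y_def[symmetric] by (simp add: exp_add[symmetric])
  qed
  show ?thesis
    by (rule summable_on_comparison_test[OF summable_on_cmult_right[OF summable_exp_abs, of "exp K"]])
       (use le in \<open>auto intro: less_imp_le[OF cc_pos]\<close>)
qed

definition sg :: "int \<Rightarrow> complex" where "sg m = (if even m then 1 else -1)"

lemma term_id:
  fixes \<sigma> \<kappa> zr :: real and m :: int
  shows "exp (2 * pi * \<i> * \<sigma> * of_real zr) *
     (exp (pi * \<i> * (\<i> * \<kappa>) * (of_int m - 1/2)^2) * exp (pi * \<i> * (\<sigma> * (\<i> * \<kappa>) + of_real zr) * (2 * of_int m - 1)))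
   = of_real (cc \<sigma> \<kappa> m) * exp (\<i> * of_real (2 * pi * zr * (of_int m - 1/2 + \<sigma>)))"
proof -
  have "exp (2 * pi * \<i> * \<sigma> * of_real zr) *
     (exp (pi * \<i> * (\<i> * \<kappa>) * (of_int m - 1/2)^2) * exp (pi * \<i> * (\<sigma> * (\<i> * \<kappa>) + of_real zr) * (2 * of_int m - 1)))
    = exp (2 * pi * \<i> * \<sigma> * of_real zr + pi * \<i> * (\<i> * \<kappa>) * (of_int m - 1/2)^2 + pi * \<i> * (\<sigma> * (\<i> * \<kappa>) + of_real zr) * (2 * of_int m - 1))"
    by (simp add: exp_add)
  also have "\<dots> = exp (of_real (-(pi * \<kappa> * ((of_int m - 1/2 + \<sigma>)^2 - \<sigma>^2))) + \<i> * of_real (2 * pi * zr * (of_int m - 1/2 + \<sigma>)))"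
    by (rule arg_cong[where f=exp]) (simp add: algebra_simps power2_eq_square)
  also have "\<dots> = of_real (cc \<sigma> \<kappa> m) * exp (\<i> * of_real (2 * pi * zr * (of_int m - 1/2 + \<sigma>)))"
    by (simp only: cc_def of_real_exp exp_add)
  finally show ?thesis .
qed

lemma ce_summable:
  assumes "\<kappa> > 0" and c1: "\<forall>m. norm (c m) \<le> 1"
  shows "(\<lambda>m. c m * of_real (cc \<sigma> \<kappa> m) * exp (\<i> * of_real (ph m))) summable_on UNIV"
proof (rule abs_summable_summable, rule summable_on_comparison_test[OF cc_summable[OF assms(1), of \<sigma>]])
  fix m
  show "norm (c m * of_real (cc \<sigma> \<kappa> m) * exp (\<i> * of_real (ph m))) \<le> cc \<sigma> \<kappa> m"
    using c1 cc_pos[of \<sigma> \<kappa> m] by (simp add: norm_mult mult_left_le_one_le)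
qed simp

lemma inv_solve: "(c::complex) \<noteq> 0 \<Longrightarrow> c * P = G \<Longrightarrow> P = inverse c * G"
  by (auto simp: field_simps)

lemma term_inv:
  fixes \<sigma> \<kappa> zr :: real and m :: int
  shows "exp (pi * \<i> * (\<i> * \<kappa>) * (of_int m - 1/2)^2) * exp (pi * \<i> * (\<sigma> * (\<i> * \<kappa>) + of_real zr) * (2 * of_int m - 1))
    = inverse (exp (2 * pi * \<i> * \<sigma> * of_real zr)) * (of_real (cc \<sigma> \<kappa> m) * exp (\<i> * of_real (2 * pi * zr * (of_int m - 1/2 + \<sigma>))))"
proof -
  have c0: "exp (2 * pi * \<i> * \<sigma> * of_real zr) \<noteq> 0" by simp
  show ?thesis by (rule inv_solve[OF c0 term_id])
qed

lemma theta2_exp: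
  fixes \<sigma> \<kappa> zr :: real
  assumes "\<kappa> > 0"
  shows "exp (2 * pi * \<i> * \<sigma> * of_real zr) * theta2 (\<sigma> * (\<i> * \<kappa>) + of_real zr) (\<i> * \<kappa>)
     = (\<Sum>\<^sub>\<infinity>m. of_real (cc \<sigma> \<kappa> m) * exp (\<i> * of_real (2 * pi * zr * (of_int m - 1/2 + \<sigma>))))"
proof -
  define c where "c = exp (2 * pi * \<i> * \<sigma> * of_real zr)"
  have c0: "c \<noteq> 0" by (simp add: c_def)
  define g where "g m = of_real (cc \<sigma> \<kappa> m) * exp (\<i> * of_real (2 * pi * zr * (of_int m - 1/2 + \<sigma>)))" for m
  have gs: "g summable_on UNIV" unfolding g_def
    using ce_summable[OF assms, of "\<lambda>_. 1" \<sigma> "\<lambda>m. 2 * pi * zr * (of_int m - 1/2 + \<sigma>)"] by simp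
  have "theta2 (\<sigma> * (\<i> * \<kappa>) + of_real zr) (\<i> * \<kappa>) = (\<Sum>\<^sub>\<infinity>m. inverse c * g m)"
    unfolding theta2_def c_def g_def by (rule infsum_cong, rule term_inv)
  also have "\<dots> = inverse c * (\<Sum>\<^sub>\<infinity>m. g m)" by (rule infsum_cmult_right) (use gs in auto)
  finally have "c * theta2 (\<sigma> * (\<i> * \<kappa>) + of_real zr) (\<i> * \<kappa>) = (\<Sum>\<^sub>\<infinity>m. g m)"
    using c0 by simp
  then show ?thesis unfolding c_def g_def .
qed

lemma theta1_exp:
  fixes \<sigma> \<kappa> zr :: real
  assumes "\<kappa> > 0"
  shows "exp (2 * pi * \<i> * \<sigma> * of_real zr) * theta1 (\<sigma> * (\<i> * \<kappa>) + of_real zr) (\<i> * \<kappa>)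
     = (\<Sum>\<^sub>\<infinity>m. \<i> * sg m * of_real (cc \<sigma> \<kappa> m) * exp (\<i> * of_real (2 * pi * zr * (of_int m - 1/2 + \<sigma>))))"
proof -
  define c where "c = exp (2 * pi * \<i> * \<sigma> * of_real zr)"
  have c0: "c \<noteq> 0" by (simp add: c_def)
  define g where "g m = of_real (cc \<sigma> \<kappa> m) * exp (\<i> * of_real (2 * pi * zr * (of_int m - 1/2 + \<sigma>)))" for m
  have sg1: "\<forall>m. norm (sg m) \<le> 1" by (simp add: sg_def)
  have "(\<lambda>m. sg m * of_real (cc \<sigma> \<kappa> m) * exp (\<i> * of_real (2 * pi * zr * (of_int m - 1/2 + \<sigma>)))) summable_on UNIV"
    by (rule ce_summable[OF assms sg1])
  then have gs: "(\<lambda>m. sg m * g m) summable_on UNIV" unfolding g_def by (simp only: mult.assoc)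
  have "theta1 (\<sigma> * (\<i> * \<kappa>) + of_real zr) (\<i> * \<kappa>) = \<i> * (\<Sum>\<^sub>\<infinity>m. inverse c * (sg m * g m))"
    unfolding theta1_def
  proof (rule arg_cong[where f="\<lambda>u. \<i> * u"], rule infsum_cong)
    fix m :: int
    show "(if even m then 1 else -1) * exp (pi * \<i> * (\<i> * \<kappa>) * (of_int m - 1/2)^2) * exp (pi * \<i> * (\<sigma> * (\<i> * \<kappa>) + of_real zr) * (2 * of_int m - 1)) = inverse c * (sg m * g m)"
    proof -
      have T: "exp (pi * \<i> * (\<i> * \<kappa>) * (of_int m - 1/2)^2) * exp (pi * \<i> * (\<sigma> * (\<i> * \<kappa>) + of_real zr) * (2 * of_int m - 1)) = inverse c * g m" unfolding c_def g_def by (rule term_inv)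
      have "(if even m then 1 else -1) * exp (pi * \<i> * (\<i> * \<kappa>) * (of_int m - 1/2)^2) * exp (pi * \<i> * (\<sigma> * (\<i> * \<kappa>) + of_real zr) * (2 * of_int m - 1)) = (if even m then 1 else -1) * (exp (pi * \<i> * (\<i> * \<kappa>) * (of_int m - 1/2)^2) * exp (pi * \<i> * (\<sigma> * (\<i> * \<kappa>) + of_real zr) * (2 * of_int m - 1)))" by (rule mult.assoc)
      also have "\<dots> = (if even m then 1 else -1) * (inverse c * g m)" by (simp only: T)
      also have "\<dots> = inverse c * (sg m * g m)" by (simp add: sg_def)
      finally show ?thesis .
    qed
  qed
  also have "\<dots> = \<i> * (inverse c * (\<Sum>\<^sub>\<infinity>m. sg m * g m))" by (subst infsum_cmult_right) (use gs in auto)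
  also have "\<dots> = inverse c * (\<Sum>\<^sub>\<infinity>m. \<i> * (sg m * g m))" by (subst infsum_cmult_right) (use gs in auto)
  finally have "c * theta1 (\<sigma> * (\<i> * \<kappa>) + of_real zr) (\<i> * \<kappa>) = (\<Sum>\<^sub>\<infinity>m. \<i> * (sg m * g m))"
    using c0 by simp
  then show ?thesis unfolding c_def g_def by (simp only: mult.assoc)
qed

definition bph :: "real \<Rightarrow> real \<Rightarrow> complex" where
  "bph s \<phi> = exp (\<i> * of_real \<phi>) + of_real s * exp (- (\<i> * of_real \<phi>))"

fun sv :: "sharp_type \<Rightarrow> real" where
  "sv SA = 0" | "sv SB = -1" | "sv SC = -1" | "sv SD = 1"

definition ep :: "sharp_type \<Rightarrow> int \<Rightarrow> complex" where
  "ep S m = (if S = SB then \<i> * sg m else 1)"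

lemma ep_norm: "norm (ep S m) = 1" by (simp add: ep_def sg_def norm_mult)

lemma infsum_sub:
  fixes f g :: "'a \<Rightarrow> complex"
  assumes "f summable_on A" "g summable_on A"
  shows "infsum (\<lambda>x. f x - g x) A = infsum f A - infsum g A"
proof -
  have "(\<lambda>x. - g x) summable_on A" using assms(2) by (simp add: summable_on_uminus)
  then have "infsum (\<lambda>x. f x + - g x) A = infsum f A + infsum (\<lambda>x. - g x) A" by (rule infsum_add[OF assms(1)])
  then show ?thesis by (simp add: infsum_uminus)
qed

lemma neg_phase: "exp (\<i> * of_real (2 * pi * (- zr) * a)) = exp (- (\<i> * of_real (2 * pi * zr * a)))"
  by simp

lemma Theta_rep:
  fixes \<sigma> \<kappa> zr :: real
  assumes k: "\<kappa> > 0"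
  shows "Theta_of S \<sigma> (of_real zr) (\<i> * of_real \<kappa>) =
     (\<Sum>\<^sub>\<infinity>m. ep S m * of_real (cc \<sigma> \<kappa> m) * bph (sv S) (2 * pi * zr * (of_int m - 1/2 + \<sigma>)))"
proof -
  define ph where "ph m = 2 * pi * zr * (of_int m - 1/2 + \<sigma>)" for m :: int
  define e where "e m = exp (\<i> * of_real (ph m))" for m
  define f where "f m = exp (- (\<i> * of_real (ph m)))" for m
  have e1: "\<forall>m. norm (e m) \<le> 1" unfolding e_def by simp
  have ph': "2 * pi * (- zr) * (of_int m - 1/2 + \<sigma>) = - ph m" for m unfolding ph_def by simp
  have E1: "exp (- 2 * pi * \<i> * \<sigma> * of_real zr) = exp (2 * pi * \<i> * \<sigma> * of_real (- zr))" by simp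
  have E2: "\<sigma> * (\<i> * of_real \<kappa>) - of_real zr = \<sigma> * (\<i> * of_real \<kappa>) + of_real (- zr)" by simp
  have P2: "exp (2 * pi * \<i> * \<sigma> * of_real zr) * theta2 (\<sigma> * (\<i> * \<kappa>) + of_real zr) (\<i> * \<kappa>)
      = (\<Sum>\<^sub>\<infinity>m. of_real (cc \<sigma> \<kappa> m) * e m)"
    unfolding e_def ph_def by (rule theta2_exp[OF k])
  have Q2: "exp (- 2 * pi * \<i> * \<sigma> * of_real zr) * theta2 (\<sigma> * (\<i> * \<kappa>) - of_real zr) (\<i> * \<kappa>)
      = (\<Sum>\<^sub>\<infinity>m. of_real (cc \<sigma> \<kappa> m) * f m)"
    unfolding E1 E2 theta2_exp[OF k] f_def ph' by simp
  have P1: "exp (2 * pi * \<i> * \<sigma> * of_real zr) * theta1 (\<sigma> * (\<i> * \<kappa>) + of_real zr) (\<i> * \<kappa>)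
      = (\<Sum>\<^sub>\<infinity>m. \<i> * sg m * of_real (cc \<sigma> \<kappa> m) * e m)"
    unfolding e_def ph_def by (rule theta1_exp[OF k])
  have Q1: "exp (- 2 * pi * \<i> * \<sigma> * of_real zr) * theta1 (\<sigma> * (\<i> * \<kappa>) - of_real zr) (\<i> * \<kappa>)
      = (\<Sum>\<^sub>\<infinity>m. \<i> * sg m * of_real (cc \<sigma> \<kappa> m) * f m)"
    unfolding E1 E2 theta1_exp[OF k] f_def ph' by simp
  have se: "(\<lambda>m. of_real (cc \<sigma> \<kappa> m) * e m) summable_on UNIV"
    using ce_summable[OF k, of "\<lambda>_. 1" \<sigma> ph] unfolding e_def by simp
  have sf: "(\<lambda>m. of_real (cc \<sigma> \<kappa> m) * f m) summable_on UNIV"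
    using ce_summable[OF k, of "\<lambda>_. 1" \<sigma> "\<lambda>m. - ph m"] unfolding f_def by simp
  have sg1: "\<forall>m. norm (\<i> * sg m) \<le> 1" by (simp add: sg_def norm_mult)
  have se1: "(\<lambda>m. \<i> * sg m * of_real (cc \<sigma> \<kappa> m) * e m) summable_on UNIV"
    using ce_summable[OF k sg1, of \<sigma> ph] unfolding e_def .
  have sf1: "(\<lambda>m. \<i> * sg m * of_real (cc \<sigma> \<kappa> m) * f m) summable_on UNIV"
    using ce_summable[OF k sg1, of \<sigma> "\<lambda>m. - ph m"] unfolding f_def by simp
  have bph: "bph s (ph m) = e m + of_real s * f m" for s m unfolding bph_def e_def f_def ..
  show ?thesis
  proof (cases S)
    case SA
    then show ?thesis unfolding ph_def[symmetric] using P2 by (simp add: ThetaA_def ep_def bph)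
  next
    case SB
    have "Theta_of S \<sigma> (of_real zr) (\<i> * of_real \<kappa>) = (\<Sum>\<^sub>\<infinity>m. \<i> * sg m * of_real (cc \<sigma> \<kappa> m) * e m) - (\<Sum>\<^sub>\<infinity>m. \<i> * sg m * of_real (cc \<sigma> \<kappa> m) * f m)"
      using SB P1 Q1 by (simp add: ThetaB_def)
    also have "\<dots> = (\<Sum>\<^sub>\<infinity>m. \<i> * sg m * of_real (cc \<sigma> \<kappa> m) * e m - \<i> * sg m * of_real (cc \<sigma> \<kappa> m) * f m)"
      by (rule infsum_sub[symmetric, OF se1 sf1])
    also have "\<dots> = (\<Sum>\<^sub>\<infinity>m. ep S m * of_real (cc \<sigma> \<kappa> m) * bph (sv S) (ph m))"
      by (rule infsum_cong) (simp add: SB ep_def bph algebra_simps)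
    finally show ?thesis unfolding ph_def .
  next
    case SC
    have "Theta_of S \<sigma> (of_real zr) (\<i> * of_real \<kappa>) = (\<Sum>\<^sub>\<infinity>m. of_real (cc \<sigma> \<kappa> m) * e m) - (\<Sum>\<^sub>\<infinity>m. of_real (cc \<sigma> \<kappa> m) * f m)"
      using SC P2 Q2 by (simp add: ThetaC_def)
    also have "\<dots> = (\<Sum>\<^sub>\<infinity>m. of_real (cc \<sigma> \<kappa> m) * e m - of_real (cc \<sigma> \<kappa> m) * f m)"
      by (rule infsum_sub[symmetric, OF se sf])
    also have "\<dots> = (\<Sum>\<^sub>\<infinity>m. ep S m * of_real (cc \<sigma> \<kappa> m) * bph (sv S) (ph m))"
      by (rule infsum_cong) (simp add: SC ep_def bph algebra_simps)
    finally show ?thesis unfolding ph_def .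
  next
    case SD
    have "Theta_of S \<sigma> (of_real zr) (\<i> * of_real \<kappa>) = (\<Sum>\<^sub>\<infinity>m. of_real (cc \<sigma> \<kappa> m) * e m) + (\<Sum>\<^sub>\<infinity>m. of_real (cc \<sigma> \<kappa> m) * f m)"
      using SD P2 Q2 by (simp add: ThetaD_def)
    also have "\<dots> = (\<Sum>\<^sub>\<infinity>m. of_real (cc \<sigma> \<kappa> m) * e m + of_real (cc \<sigma> \<kappa> m) * f m)"
      by (rule infsum_add[symmetric, OF se sf])
    also have "\<dots> = (\<Sum>\<^sub>\<infinity>m. ep S m * of_real (cc \<sigma> \<kappa> m) * bph (sv S) (ph m))"
      by (rule infsum_cong) (simp add: SD ep_def bph algebra_simps)
    finally show ?thesis unfolding ph_def .
  qed
qed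

lemma cnj_bph: "cnj (bph s \<phi>) = exp (- (\<i> * of_real \<phi>)) + of_real s * exp (\<i> * of_real \<phi>)"
  by (simp add: bph_def exp_cnj)

lemma norm_bph: "\<bar>s\<bar> \<le> 1 \<Longrightarrow> norm (bph s \<phi>) \<le> 2"
proof -
  assume s: "\<bar>s\<bar> \<le> 1"
  have "norm (bph s \<phi>) \<le> norm (exp (\<i> * of_real \<phi>)) + norm (of_real s * exp (- (\<i> * of_real \<phi>)))"
    unfolding bph_def by (rule norm_triangle_ineq)
  also have "\<dots> \<le> 2" using s by (simp add: norm_mult)
  finally show ?thesis .
qed

lemma cont_bb: "continuous_on A (\<lambda>x::real. c * (cnj (bph s (w * x)) * bph s (w' * x)))"
  unfolding cnj_bph bph_def by (intro continuous_intros)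

lemma int2:
  fixes \<alpha> \<beta> :: "int \<Rightarrow> complex" and w w' :: "int \<Rightarrow> real"
  assumes na: "(\<lambda>m. norm (\<alpha> m)) summable_on UNIV" and nb: "(\<lambda>m. norm (\<beta> m)) summable_on UNIV"
    and s: "\<bar>s\<bar> \<le> 1"
  shows "integral {0..L} (\<lambda>x. cnj (\<Sum>\<^sub>\<infinity>m. \<alpha> m * bph s (w m * x)) * (\<Sum>\<^sub>\<infinity>m. \<beta> m * bph s (w' m * x)))
    = (\<Sum>\<^sub>\<infinity>p. cnj (\<alpha> (fst p)) * \<beta> (snd p) * integral {0..L} (\<lambda>x. cnj (bph s (w (fst p) * x)) * bph s (w' (snd p) * x)))"
proof -
  define f where "f p x = (cnj (\<alpha> (fst p)) * \<beta> (snd p)) * (cnj (bph s (w (fst p) * x)) * bph s (w' (snd p) * x))" for p :: "int \<times> int" and x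
  have pw: "cnj (\<Sum>\<^sub>\<infinity>m. \<alpha> m * bph s (w m * x)) * (\<Sum>\<^sub>\<infinity>m. \<beta> m * bph s (w' m * x)) = (\<Sum>\<^sub>\<infinity>p. f p x)" for x
  proof -
    define a where "a m = cnj (\<alpha> m * bph s (w m * x))" for m
    define b where "b m = \<beta> m * bph s (w' m * x)" for m
    have a2: "norm (a m) \<le> 2 * norm (\<alpha> m)" for m
      proof -
      have "norm (a m) = norm (\<alpha> m) * norm (bph s (w m * x))" unfolding a_def by (simp add: norm_mult)
      also have "\<dots> \<le> norm (\<alpha> m) * 2" by (rule mult_left_mono[OF norm_bph[OF s] norm_ge_zero])
      finally show ?thesis by simp
    qed
    have b2: "norm (b m) \<le> 2 * norm (\<beta> m)" for m
      proof -
      have "norm (b m) = norm (\<beta> m) * norm (bph s (w' m * x))" unfolding b_def by (simp add: norm_mult)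
      also have "\<dots> \<le> norm (\<beta> m) * 2" by (rule mult_left_mono[OF norm_bph[OF s] norm_ge_zero])
      finally show ?thesis by simp
    qed
    have sa: "(\<lambda>m. norm (a m)) summable_on UNIV"
      by (rule summable_on_comparison_test[OF summable_on_cmult_right[OF na, of 2]]) (use a2 in auto)
    have sb: "(\<lambda>m. norm (b m)) summable_on UNIV"
      by (rule summable_on_comparison_test[OF summable_on_cmult_right[OF nb, of 2]]) (use b2 in auto)
    have "cnj (\<Sum>\<^sub>\<infinity>m. \<alpha> m * bph s (w m * x)) = (\<Sum>\<^sub>\<infinity>m. a m)" unfolding a_def by (rule infsum_cnj[symmetric])
    then have "cnj (\<Sum>\<^sub>\<infinity>m. \<alpha> m * bph s (w m * x)) * (\<Sum>\<^sub>\<infinity>m. \<beta> m * bph s (w' m * x)) = (\<Sum>\<^sub>\<infinity>m. a m) * (\<Sum>\<^sub>\<infinity>m. b m)"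
      unfolding b_def by simp
    also have "\<dots> = (\<Sum>\<^sub>\<infinity>p. a (fst p) * b (snd p))" by (rule infsum_prod(2)[OF sa sb])
    also have "\<dots> = (\<Sum>\<^sub>\<infinity>p. f p x)" by (rule infsum_cong) (simp add: a_def b_def f_def)
    finally show ?thesis .
  qed
  have "integral {0..L} (\<lambda>x. cnj (\<Sum>\<^sub>\<infinity>m. \<alpha> m * bph s (w m * x)) * (\<Sum>\<^sub>\<infinity>m. \<beta> m * bph s (w' m * x)))
       = integral {0..L} (\<lambda>x. \<Sum>\<^sub>\<infinity>p. f p x)" by (simp only: pw)
  also have "\<dots> = (\<Sum>\<^sub>\<infinity>p. integral {0..L} (f p))"
  proof (rule integral_infsum[OF fl_int2])
    show "continuous_on {0..L} (f p)" for p unfolding f_def by (rule cont_bb)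
    show "norm (f p x) \<le> 4 * norm (\<alpha> (fst p) * \<beta> (snd p))" for p x
    proof -
      have "norm (f p x) = norm (\<alpha> (fst p) * \<beta> (snd p)) * (norm (bph s (w (fst p) * x)) * norm (bph s (w' (snd p) * x)))"
        unfolding f_def by (simp add: norm_mult)
      also have "\<dots> \<le> norm (\<alpha> (fst p) * \<beta> (snd p)) * (2 * 2)"
        by (intro mult_left_mono mult_mono norm_bph s) auto
      finally show ?thesis by simp
    qed
    show "(\<lambda>p. 4 * norm (\<alpha> (fst p) * \<beta> (snd p))) summable_on UNIV"
      by (rule summable_on_cmult_right, rule infsum_prod(1)[OF na nb])
  qed
  also have "\<dots> = (\<Sum>\<^sub>\<infinity>p. cnj (\<alpha> (fst p)) * \<beta> (snd p) * integral {0..L} (\<lambda>x. cnj (bph s (w (fst p) * x)) * bph s (w' (snd p) * x)))"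
    unfolding f_def by (rule infsum_cong, rule integral_mult_right)
  finally show ?thesis .
qed

lemma exp4: "(exp (-A) + s * exp A) * (exp B + s * exp (-B)) =
   exp (B - A) + s^2 * exp (A - B) + s * (exp (A + B) + exp (-(A + B)))" for A B s :: complex
proof -
  have 1: "exp (-A) * exp B = exp (B - A)" using exp_add[of "-A" B] by (simp add: add.commute)
  have 2: "exp A * exp (-B) = exp (A - B)" using exp_add[of A "-B"] by simp
  have 3: "exp (-A) * exp (-B) = exp (-(A + B))" using exp_add[of "-A" "-B"] by simp
  have 4: "exp A * exp B = exp (A + B)" using exp_add[of A B] by simp
  have "(exp (-A) + s * exp A) * (exp B + s * exp (-B)) = exp (-A) * exp B + s^2 * (exp A * exp (-B)) + s * (exp A * exp B + exp (-A) * exp (-B))"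
    by (simp add: algebra_simps power2_eq_square)
  then show ?thesis by (simp only: 1 2 3 4)
qed

lemma expint:
  fixes u L :: real
  assumes L: "L \<ge> 0"
  shows "((\<lambda>x. exp (\<i> * of_real (u * x))) has_integral
     (if u = 0 then of_real L else (exp (\<i> * of_real (u * L)) - 1) / (\<i> * of_real u))) {0..L}"
proof (cases "u = 0")
  case True
  then show ?thesis using has_integral_const_real[of "1::complex" 0 L] L by (simp add: scaleR_conv_of_real)
next
  case False
  define c where "c = \<i> * of_real u"
  have c0: "c \<noteq> 0" using False by (simp add: c_def)
  have e: "exp (\<i> * of_real (u * x)) = exp (c * of_real x)" for x by (simp add: c_def mult.assoc)
  have d: "((\<lambda>x. exp (c * of_real x) / c) has_vector_derivative exp (c * of_real x)) (at x within {0..L})" for x :: real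
  proof -
    have "((\<lambda>z. exp (c * z) / c) has_field_derivative exp (c * of_real x)) (at (of_real x))"
      using c0 by (auto intro!: derivative_eq_intros)
    then have "((\<lambda>x. exp (c * of_real x) / c) has_vector_derivative exp (c * of_real x)) (at x)"
      by (rule has_vector_derivative_real_field)
    then show ?thesis by (rule has_vector_derivative_at_within)
  qed
  have "((\<lambda>x. exp (c * of_real x)) has_integral (exp (c * of_real L) / c - exp (c * of_real 0) / c)) {0..L}"
    by (rule fundamental_theorem_of_calculus[OF L d])
  then show ?thesis using False c0 unfolding e by (simp add: c_def diff_divide_distrib mult.assoc)
qed

lemma eik: "exp (\<i> * of_real (of_int k * pi)) = exp (- (\<i> * of_real (of_int k * pi)))"
proof -
  have "exp (\<i> * of_real (of_int k * pi)) = exp (- (\<i> * of_real (of_int k * pi)) + (2 * of_int k * pi) * \<i>)"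
    by (rule arg_cong[where f=exp]) (simp add: algebra_simps)
  also have "\<dots> = exp (- (\<i> * of_real (of_int k * pi))) * exp ((2 * of_int k * pi) * \<i>)" by (rule exp_add)
  also have "exp ((2 * of_int k * pi) * \<i>) = 1" using exp_integer_2pi[of "of_int k"] by simp
  finally show ?thesis by simp
qed

lemma e2k: "exp (\<i> * of_real (2 * pi * of_int k)) = 1"
  using exp_integer_2pi[of "of_int k"] by (simp add: mult.commute mult.left_commute)

lemma Jint:
  fixes u r :: real
  assumes r: "r > 0" and k: "u * r = of_int k"
  shows "integral {0..pi*r} (\<lambda>x. exp (\<i> * of_real (u * x)) + exp (\<i> * of_real ((-u) * x))) = (if u = 0 then 2 * pi * r else 0)"
proof -
  have L: "pi * r \<ge> 0" using r by simp
  have h: "((\<lambda>x. exp (\<i> * of_real (u * x)) + exp (\<i> * of_real ((-u) * x))) has_integral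
     ((if u = 0 then of_real (pi*r) else (exp (\<i> * of_real (u * (pi*r))) - 1) / (\<i> * of_real u)) +
      (if -u = 0 then of_real (pi*r) else (exp (\<i> * of_real ((-u) * (pi*r))) - 1) / (\<i> * of_real (-u))))) {0..pi*r}"
    by (rule has_integral_add[OF expint[OF L] expint[OF L]])
  show ?thesis
  proof (cases "u = 0")
    case True then show ?thesis using integral_unique[OF h] by simp
  next
    case False
    have uL: "u * (pi * r) = of_int k * pi" using k by (simp add: algebra_simps)
    have uL2: "(-u) * (pi*r) = - (of_int k * pi)" using k by (simp add: algebra_simps)
    have "exp (\<i> * of_real (u * (pi*r))) = exp (\<i> * of_real ((-u) * (pi*r)))"
      unfolding uL uL2 of_real_minus mult_minus_right by (rule eik)
    then show ?thesis using integral_unique[OF h] False by (simp add: field_simps)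
  qed
qed

lemma JintA:
  fixes u r :: real
  assumes r: "r > 0" and k: "u * r = of_int k"
  shows "integral {0..2*pi*r} (\<lambda>x. exp (\<i> * of_real (u * x))) = (if u = 0 then 2 * pi * r else 0)"
proof -
  have L: "2*pi * r \<ge> 0" using r by simp
  have uL: "u * (2*pi * r) = 2 * pi * of_int k" using k by (simp add: algebra_simps)
  show ?thesis using integral_unique[OF expint[OF L, of u]] e2k[of k] unfolding uL by simp
qed

lemma int_lin:
  fixes f g :: "real \<Rightarrow> complex"
  assumes "f integrable_on S" "g integrable_on S"
  shows "integral S (\<lambda>x. f x + c * g x) = integral S f + c * integral S g"
  by (rule integral_unique, rule has_integral_add[OF integrable_integral[OF assms(1)] has_integral_mult_right[OF integrable_integral[OF assms(2)]]])

lemma gramS: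
  fixes w w' r s :: real
  assumes r: "r > 0" and s: "s^2 = 1" and k1: "(w' - w) * r = of_int k1" and k2: "(w + w') * r = of_int k2"
  shows "integral {0..pi*r} (\<lambda>x. cnj (bph s (w*x)) * bph s (w'*x))
     = 2 * pi * r * ((if w = w' then 1 else 0) + s * (if w = - w' then 1 else 0))"
proof -
  define E where "E u x = exp (\<i> * of_real (u * x))" for u x :: real
  have pw: "cnj (bph s (w*x)) * bph s (w'*x) = (E (w'-w) x + E (-(w'-w)) x) + of_real s * (E (w+w') x + E (-(w+w')) x)" for x
  proof -
    have "cnj (bph s (w*x)) * bph s (w'*x) = (exp (- (\<i> * of_real (w*x))) + of_real s * exp (\<i> * of_real (w*x))) * (exp (\<i> * of_real (w'*x)) + of_real s * exp (- (\<i> * of_real (w'*x))))"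
      unfolding cnj_bph unfolding bph_def ..
    also have "\<dots> = exp (\<i> * of_real (w'*x) - \<i> * of_real (w*x)) + (of_real s)^2 * exp (\<i> * of_real (w*x) - \<i> * of_real (w'*x))
        + of_real s * (exp (\<i> * of_real (w*x) + \<i> * of_real (w'*x)) + exp (- (\<i> * of_real (w*x) + \<i> * of_real (w'*x))))"
      by (rule exp4)
    also have "(of_real s :: complex)^2 = 1" using s by (metis of_real_eq_1_iff of_real_power)
    finally show ?thesis unfolding E_def by (simp add: algebra_simps)
  qed
  have i1: "(\<lambda>x. E u x + E (-u) x) integrable_on {0..pi*r}" for u
    unfolding E_def by (intro integrable_continuous_interval continuous_intros)
  have "integral {0..pi*r} (\<lambda>x. cnj (bph s (w*x)) * bph s (w'*x))
      = integral {0..pi*r} (\<lambda>x. E (w'-w) x + E (-(w'-w)) x) + of_real s * integral {0..pi*r} (\<lambda>x. E (w+w') x + E (-(w+w')) x)"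
    unfolding pw by (rule int_lin[OF i1 i1])
  also have "\<dots> = (if w'-w = 0 then 2*pi*r else 0) + of_real s * (if w+w' = 0 then 2*pi*r else 0)"
    unfolding E_def Jint[OF r k1] Jint[OF r k2] by simp
  finally show ?thesis by (auto simp: algebra_simps)
qed

lemma gramA:
  fixes w w' r :: real
  assumes r: "r > 0" and k1: "(w' - w) * r = of_int k1"
  shows "integral {0..2*pi*r} (\<lambda>x. cnj (bph 0 (w*x)) * bph 0 (w'*x)) = 2 * pi * r * (if w = w' then 1 else 0)"
proof -
  have pw: "cnj (bph 0 (w*x)) * bph 0 (w'*x) = exp (\<i> * of_real ((w'-w) * x))" for x
  proof -
    have "cnj (bph 0 (w*x)) * bph 0 (w'*x) = exp (- (\<i> * of_real (w*x))) * exp (\<i> * of_real (w'*x))"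
      unfolding cnj_bph unfolding bph_def by simp
    also have "\<dots> = exp (- (\<i> * of_real (w*x)) + \<i> * of_real (w'*x))" by (rule exp_add[symmetric])
    also have "\<dots> = exp (\<i> * of_real ((w'-w) * x))" by (rule arg_cong[where f=exp]) (simp add: algebra_simps)
    finally show ?thesis .
  qed
  show ?thesis unfolding pw JintA[OF r k1] by simp
qed

definition om :: "real \<Rightarrow> real \<Rightarrow> real \<Rightarrow> int \<Rightarrow> real" where
  "om n \<sigma> r m = n * (of_int m - 1/2 + \<sigma>) / r"

lemma M_rep:
  assumes n: "Ncal R N > 0" and r: "r > 0" and t: "t > 0"
  shows "M R N r j x t = (\<Sum>\<^sub>\<infinity>m. ep (sharp R) m * of_real (cc (Jfun R j / Ncal R N) (Ncal R N ^ 2 * t / (2 * pi * r^2)) m)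
           * bph (sv (sharp R)) (om (Ncal R N) (Jfun R j / Ncal R N) r m * x))"
proof -
  define n where "n = Ncal R N"
  define \<kappa> where "\<kappa> = n ^ 2 * t / (2 * pi * r^2)"
  define \<sigma> where "\<sigma> = Jfun R j / n"
  have k: "\<kappa> > 0" using n r t by (simp add: \<kappa>_def n_def)
  have T: "(of_real n)^2 * tauf r t = \<i> * of_real \<kappa>" by (simp add: tauf_def \<kappa>_def)
  have ph: "2 * pi * (n * xi r x) * (of_int m - 1/2 + \<sigma>) = om n \<sigma> r m * x" for m
    using r by (simp add: xi_def om_def field_simps)
  have "M R N r j x t = Theta_of (sharp R) \<sigma> (of_real (n * xi r x)) (\<i> * of_real \<kappa>)"
    unfolding M_def n_def[symmetric] \<sigma>_def[symmetric] T ..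
  also have "\<dots> = (\<Sum>\<^sub>\<infinity>m. ep (sharp R) m * of_real (cc \<sigma> \<kappa> m) * bph (sv (sharp R)) (2 * pi * (n * xi r x) * (of_int m - 1/2 + \<sigma>)))"
    by (rule Theta_rep[OF k])
  also have "\<dots> = (\<Sum>\<^sub>\<infinity>m. ep (sharp R) m * of_real (cc \<sigma> \<kappa> m) * bph (sv (sharp R)) (om n \<sigma> r m * x))"
    unfolding ph ..
  finally show ?thesis unfolding n_def \<kappa>_def \<sigma>_def .
qed

lemma om_r: "n \<noteq> 0 \<Longrightarrow> r \<noteq> 0 \<Longrightarrow> om n (J / n) r m * r = n * (of_int m - 1/2) + J"
  by (simp add: om_def field_simps)

lemma diag_int:
  fixes n d :: real and q :: int
  assumes "n > 0" "\<bar>d\<bar> < n" "n * of_int q = d"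
  shows "q = 0 \<and> d = 0"
proof (cases "q = 0")
  case True then show ?thesis using assms by simp
next
  case False
  then have "\<bar>real_of_int q\<bar> \<ge> 1" by linarith
  then have "n * \<bar>real_of_int q\<bar> \<ge> n" using assms(1) by (simp add: mult_le_cancel_left1)
  then have "\<bar>d\<bar> \<ge> n" using assms(3) by (metis abs_mult abs_of_pos assms(1))
  then show ?thesis using assms(2) by simp
qed

lemma anti_int:
  fixes n c :: real and q :: int
  assumes "n > 0" "0 \<le> c" "c \<le> n"
  shows "n * of_int q + c = 0 \<longleftrightarrow> (c = 0 \<and> q = 0) \<or> (c = n \<and> q = -1)"
proof -
  consider "q \<ge> 1" | "q = 0" | "q = -1" | "q \<le> -2" by linarith
  then show ?thesis
  proof cases
    case 1
    then have "n * of_int q \<ge> n * 1" using assms(1) by (intro mult_left_mono) auto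
    then have "n * of_int q + c \<noteq> 0" using assms by linarith
    then show ?thesis using 1 by auto
  next
    case 4
    then have "n * of_int q \<le> n * (-2)" using assms(1) by (intro mult_left_mono) auto
    then have "n * of_int q + c \<noteq> 0" using assms by linarith
    then show ?thesis using 4 by auto
  qed (use assms in auto)
qed

lemma infsum_graph:
  fixes F :: "int \<times> int \<Rightarrow> complex"
  shows "(\<Sum>\<^sub>\<infinity>p. if snd p = g (fst p) then F p else 0) = (\<Sum>\<^sub>\<infinity>m. F (m, g m))"
proof -
  have "(\<Sum>\<^sub>\<infinity>p. if snd p = g (fst p) then F p else 0) = (\<Sum>\<^sub>\<infinity>p\<in>range (\<lambda>m. (m, g m)). F p)"
    by (rule infsum_cong_neutral) auto
  also have "\<dots> = (\<Sum>\<^sub>\<infinity>m. (F \<circ> (\<lambda>m. (m, g m))) m)"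
    by (rule infsum_reindex) (auto simp: inj_on_def)
  finally show ?thesis by simp
qed

lemma infsum_graph_if:
  fixes F :: "int \<times> int \<Rightarrow> complex"
  shows "(\<Sum>\<^sub>\<infinity>p. if P \<and> snd p = g (fst p) then F p else 0) = (if P then (\<Sum>\<^sub>\<infinity>m. F (m, g m)) else 0)"
  using infsum_graph[of g F] by (cases P) auto

lemma cc_add: "cc \<sigma> k1 m * cc \<sigma> k2 m = cc \<sigma> (k1 + k2) m"
  unfolding cc_def by (simp add: exp_add[symmetric] algebra_simps)

lemma ep_sq: "cnj (ep S m) * ep S m = 1"
  by (simp add: ep_def sg_def)

lemma ep_anti: "S = SB \<or> S = SD \<Longrightarrow> of_real (sv S) * (cnj (ep S m) * ep S (1 - m)) = 1"
  by (auto simp: ep_def sg_def)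

lemma cc_refl0: "cc 0 \<kappa> (1 - m) = cc 0 \<kappa> m"
  unfolding cc_def by (simp add: power2_eq_square algebra_simps)

lemma cc_refl1: "cc (1/2) \<kappa> (- m) = cc (1/2) \<kappa> m"
  unfolding cc_def by (simp add: power2_eq_square algebra_simps)

lemma theta2_sum:
  assumes "\<kappa> > 0"
  shows "theta2 (of_real \<sigma> * (\<i> * of_real \<kappa>)) (\<i> * of_real \<kappa>) = (\<Sum>\<^sub>\<infinity>m. of_real (cc \<sigma> \<kappa> m))"
  using theta2_exp[OF assms, of \<sigma> 0] by simp

lemma ind_summable:
  fixes F :: "'i \<Rightarrow> complex"
  assumes "(\<lambda>p. norm (F p)) summable_on UNIV"
  shows "(\<lambda>p. if Q p then F p else 0) summable_on UNIV"
  by (rule abs_summable_summable, rule summable_on_comparison_test[OF assms]) auto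

theorem lemma2p1:
  fixes R :: rtype and N :: nat and r ts t :: real and j k :: nat
  assumes "N \<ge> 1" and "R = RD \<Longrightarrow> N \<ge> 2"
    and "r > 0" and "ts > 0" and "0 < t" and "t < ts"
    and "j \<in> {1..N}" and "k \<in> {1..N}"
  shows "integral {0..Lint R r} (\<lambda>x. cnj (M R N r j x (ts - t)) * M R N r k x t)
           = mconst R N r j ts * (if j = k then 1 else 0)"
proof -
  have N1: "N \<ge> 1" and ND: "R = RD \<Longrightarrow> N \<ge> 2" and r: "r > 0" and tts: "0 < t" "t < ts"
    and j: "1 \<le> j" "j \<le> N" and k: "1 \<le> k" "k \<le> N" using assms by auto
  define n where "n = Ncal R N"
  define S where "S = sharp R"
  define s where "s = sv S"
  define Jj where "Jj = Jfun R j"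
  define Jk where "Jk = Jfun R k"
  define \<sigma>j where "\<sigma>j = Jj / n"
  define \<sigma>k where "\<sigma>k = Jk / n"
  define \<kappa>1 where "\<kappa>1 = n ^ 2 * (ts - t) / (2 * pi * r^2)"
  define \<kappa>2 where "\<kappa>2 = n ^ 2 * t / (2 * pi * r^2)"
  define \<kappa>s where "\<kappa>s = n ^ 2 * ts / (2 * pi * r^2)"
  define \<alpha> where "\<alpha> m = ep S m * of_real (cc \<sigma>j \<kappa>1 m)" for m
  define \<beta> where "\<beta> m = ep S m * of_real (cc \<sigma>k \<kappa>2 m)" for m
  define w where "w m = om n \<sigma>j r m" for m
  define w' where "w' m = om n \<sigma>k r m" for m
  define L where "L = Lint R r"
  define TH where "TH = (\<Sum>\<^sub>\<infinity>m. complex_of_real (cc \<sigma>j \<kappa>s m))"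
  define P1 where "P1 = (Jj + Jk = 0)"
  define P2 where "P2 = (Jj + Jk = n)"
  have n0: "n > 0" using N1 ND by (cases R) (auto simp: n_def)
  have nZ: "n \<in> \<int>" by (cases R) (auto simp: n_def)
  have dJ: "Jk - Jj = real k - real j" by (cases R) (auto simp: Jj_def Jk_def)
  have sJZ: "Jj + Jk \<in> \<int>"
  proof (cases R)
    case RA then have "Jj + Jk = of_int (int j + int k - 1)" by (simp add: Jj_def Jk_def)
    then show ?thesis by simp
  next
    case RCv then have "Jj + Jk = of_int (int j + int k - 1)" by (simp add: Jj_def Jk_def)
    then show ?thesis by simp
  qed (auto simp: Jj_def Jk_def)
  have ndiff: "\<bar>Jk - Jj\<bar> < n" unfolding dJ using j k N1 ND by (cases R) (auto simp: n_def)
  have rng: "R \<noteq> RA \<Longrightarrow> 0 \<le> Jj + Jk \<and> Jj + Jk \<le> n" using j k N1 ND by (cases R) (auto simp: n_def Jj_def Jk_def)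
  have s_sq: "R \<noteq> RA \<Longrightarrow> s^2 = 1" by (cases R) (auto simp: s_def S_def)
  have sA: "R = RA \<Longrightarrow> s = 0" by (simp add: s_def S_def)
  have s1: "\<bar>s\<bar> \<le> 1" by (cases R) (auto simp: s_def S_def)
  have LA: "R = RA \<Longrightarrow> L = 2 * pi * r" by (simp add: L_def Lint_def)
  have LS: "R \<noteq> RA \<Longrightarrow> L = pi * r" by (simp add: L_def Lint_def)
  have P1R: "R \<noteq> RA \<Longrightarrow> P1 \<longleftrightarrow> (j = k \<and> j = 1 \<and> (R = RB \<or> R = RBv \<or> R = RD))"
    using j k by (cases R) (auto simp: P1_def Jj_def Jk_def)
  have P2R: "R \<noteq> RA \<Longrightarrow> P2 \<longleftrightarrow> (j = k \<and> j = N \<and> R = RD)"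
    using j k N1 ND by (cases R) (auto simp: P2_def Jj_def Jk_def n_def)
  have r0: "r \<noteq> 0" using r by simp
  have k1p: "\<kappa>1 > 0" and k2p: "\<kappa>2 > 0" and ksp: "\<kappa>s > 0"
    using n0 r tts by (auto simp: \<kappa>1_def \<kappa>2_def \<kappa>s_def)
  have kk: "\<kappa>1 + \<kappa>2 = \<kappa>s" by (simp add: \<kappa>1_def \<kappa>2_def \<kappa>s_def add_divide_distrib[symmetric] algebra_simps)
  have M1: "M R N r j x (ts - t) = (\<Sum>\<^sub>\<infinity>m. \<alpha> m * bph s (w m * x))" for x
    using M_rep[of R N r "ts - t" j x] n0 r tts
    by (simp add: n_def[symmetric] \<alpha>_def w_def s_def S_def \<sigma>j_def Jj_def \<kappa>1_def)
  have M2: "M R N r k x t = (\<Sum>\<^sub>\<infinity>m. \<beta> m * bph s (w' m * x))" for x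
    using M_rep[of R N r t k x] n0 r tts
    by (simp add: n_def[symmetric] \<beta>_def w'_def s_def S_def \<sigma>k_def Jk_def \<kappa>2_def)
  have na: "(\<lambda>m. norm (\<alpha> m)) summable_on UNIV"
    using cc_summable[OF k1p, of \<sigma>j] cc_pos by (simp add: \<alpha>_def norm_mult ep_norm less_imp_le)
  have nb: "(\<lambda>m. norm (\<beta> m)) summable_on UNIV"
    using cc_summable[OF k2p, of \<sigma>k] cc_pos by (simp add: \<beta>_def norm_mult ep_norm less_imp_le)
  define G where "G p = integral {0..L} (\<lambda>x. cnj (bph s (w (fst p) * x)) * bph s (w' (snd p) * x))" for p :: "int \<times> int"
  define F where "F p = cnj (\<alpha> (fst p)) * \<beta> (snd p)" for p :: "int \<times> int"
  have I: "integral {0..Lint R r} (\<lambda>x. cnj (M R N r j x (ts - t)) * M R N r k x t) = (\<Sum>\<^sub>\<infinity>p. F p * G p)"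
    unfolding M1 M2 L_def[symmetric] F_def G_def by (rule int2[OF na nb s1])
  have wr: "w m * r = n * (of_int m - 1/2) + Jj" for m unfolding w_def \<sigma>j_def using n0 r0 by (intro om_r) auto
  have wr': "w' m * r = n * (of_int m - 1/2) + Jk" for m unfolding w'_def \<sigma>k_def using n0 r0 by (intro om_r) auto
  have Z1: "\<exists>k1. (w' m' - w m) * r = of_int k1" for m m'
  proof -
    have "(w' m' - w m) * r = n * of_int (m' - m) + (Jk - Jj)" using wr[of m] wr'[of m'] by (simp add: algebra_simps)
    also have "\<dots> \<in> \<int>" using nZ unfolding dJ by (intro Ints_add Ints_mult Ints_diff) auto
    finally show ?thesis by (auto elim!: Ints_cases)
  qed
  have Z2: "\<exists>k2. (w m + w' m') * r = of_int k2" for m m'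
  proof -
    have "(w m + w' m') * r = n * of_int (m + m' - 1) + (Jj + Jk)" using wr[of m] wr'[of m'] by (simp add: algebra_simps)
    also have "\<dots> \<in> \<int>" using nZ sJZ by (metis Ints_add Ints_mult Ints_of_int)
    finally show ?thesis by (auto elim!: Ints_cases)
  qed
  have G: "G p = 2 * pi * r * ((if w (fst p) = w' (snd p) then 1 else 0) + of_real s * (if w (fst p) = - w' (snd p) then 1 else 0))" for p
  proof (cases "R = RA")
    case True
    obtain k1 where k1: "(w' (snd p) - w (fst p)) * r = of_int k1" using Z1 by blast
    show ?thesis unfolding G_def LA[OF True] sA[OF True] using gramA[OF r k1] by simp
  next
    case False
    obtain k1 where k1: "(w' (snd p) - w (fst p)) * r = of_int k1" using Z1 by blast
    obtain k2 where k2: "(w (fst p) + w' (snd p)) * r = of_int k2" using Z2 by blast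
    show ?thesis unfolding G_def LS[OF False] using gramS[OF r s_sq[OF False] k1 k2] by simp
  qed
  have Dchar: "w m = w' m' \<longleftrightarrow> (j = k \<and> m' = m)" for m m'
  proof
    assume "w m = w' m'"
    then have "w m * r = w' m' * r" by simp
    then have "n * of_int (m - m') = Jk - Jj" unfolding wr wr' by (simp add: algebra_simps)
    from diag_int[OF n0 ndiff this] show "j = k \<and> m' = m" unfolding dJ by simp
  next
    assume "j = k \<and> m' = m"
    then show "w m = w' m'" by (simp add: w_def w'_def \<sigma>j_def \<sigma>k_def Jj_def Jk_def)
  qed
  have Achar: "w m = - w' m' \<longleftrightarrow> (P1 \<and> m' = 1 - m) \<or> (P2 \<and> m' = - m)" if nA: "R \<noteq> RA" for m m'
  proof -
    have "w m = - w' m' \<longleftrightarrow> w m * r = - (w' m' * r)" using r0 by (metis minus_mult_left mult_right_cancel)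
    also have "\<dots> \<longleftrightarrow> n * of_int (m + m' - 1) + (Jj + Jk) = 0" unfolding wr wr' by (auto simp: algebra_simps)
    also have "\<dots> \<longleftrightarrow> ((Jj + Jk) = 0 \<and> m + m' - 1 = 0) \<or> ((Jj + Jk) = n \<and> m + m' - 1 = -1)"
      using anti_int[OF n0, of "Jj + Jk" "m + m' - 1"] rng[OF nA] by simp
    also have "\<dots> \<longleftrightarrow> (P1 \<and> m' = 1 - m) \<or> (P2 \<and> m' = - m)" unfolding P1_def P2_def by auto
    finally show ?thesis .
  qed
  define D' where "D' p = (if j = k \<and> snd p = fst p then F p else 0)" for p :: "int \<times> int"
  define A1 where "A1 p = (if P1 \<and> snd p = 1 - fst p then F p else 0)" for p :: "int \<times> int"
  define A2 where "A2 p = (if P2 \<and> snd p = - fst p then F p else 0)" for p :: "int \<times> int"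
  have pw: "F p * G p = 2 * pi * r * D' p + 2 * pi * r * of_real s * (A1 p + A2 p)" for p
  proof (cases "R = RA")
    case True
    then show ?thesis unfolding G D'_def using sA[OF True] by (auto simp: Dchar)
  next
    case False
    have P12: "\<not> (P1 \<and> P2)" using n0 unfolding P1_def P2_def by auto
    show ?thesis unfolding G D'_def A1_def A2_def using Achar[OF False, of "fst p" "snd p"] P12
      by (auto simp: Dchar algebra_simps)
  qed
  have Fs: "(\<lambda>p. norm (F p)) summable_on UNIV"
  proof -
    have "(\<lambda>m. norm (cnj (\<alpha> m))) summable_on UNIV" using na by simp
    from infsum_prod(1)[OF this nb] show ?thesis unfolding F_def .
  qed
  have sD: "D' summable_on UNIV" unfolding D'_def by (rule ind_summable[OF Fs])
  have sA1: "A1 summable_on UNIV" unfolding A1_def by (rule ind_summable[OF Fs])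
  have sA2: "A2 summable_on UNIV" unfolding A2_def by (rule ind_summable[OF Fs])
  have "(\<Sum>\<^sub>\<infinity>p. F p * G p) = (\<Sum>\<^sub>\<infinity>p. 2 * pi * r * D' p + 2 * pi * r * of_real s * (A1 p + A2 p))"
    unfolding pw ..
  also have "\<dots> = (\<Sum>\<^sub>\<infinity>p. 2 * pi * r * D' p) + (\<Sum>\<^sub>\<infinity>p. 2 * pi * r * of_real s * (A1 p + A2 p))"
    by (rule infsum_add; intro summable_on_cmult_right summable_on_add sD sA1 sA2)
  also have "\<dots> = 2 * pi * r * (\<Sum>\<^sub>\<infinity>p. D' p) + 2 * pi * r * of_real s * ((\<Sum>\<^sub>\<infinity>p. A1 p) + (\<Sum>\<^sub>\<infinity>p. A2 p))"
    by (simp only: infsum_cmult_right' infsum_add[OF sA1 sA2])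
  also have "(\<Sum>\<^sub>\<infinity>p. D' p) = (if j = k then (\<Sum>\<^sub>\<infinity>m. F (m, m)) else 0)"
    unfolding D'_def by (rule infsum_graph_if[of _ "\<lambda>m. m", simplified])
  also have "(\<Sum>\<^sub>\<infinity>p. A1 p) = (if P1 then (\<Sum>\<^sub>\<infinity>m. F (m, 1 - m)) else 0)"
    unfolding A1_def by (rule infsum_graph_if)
  also have "(\<Sum>\<^sub>\<infinity>p. A2 p) = (if P2 then (\<Sum>\<^sub>\<infinity>m. F (m, - m)) else 0)"
    unfolding A2_def by (rule infsum_graph_if)
  finally have Ssum: "(\<Sum>\<^sub>\<infinity>p. F p * G p) = 2 * pi * r * (if j = k then (\<Sum>\<^sub>\<infinity>m. F (m, m)) else 0)
     + 2 * pi * r * of_real s * ((if P1 then (\<Sum>\<^sub>\<infinity>m. F (m, 1 - m)) else 0) + (if P2 then (\<Sum>\<^sub>\<infinity>m. F (m, - m)) else 0))" .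
  have E1: "(\<Sum>\<^sub>\<infinity>m. F (m, m)) = TH" if jk: "j = k"
  proof -
    have "F (m, m) = of_real (cc \<sigma>j \<kappa>s m)" for m
    proof -
      have "F (m, m) = (cnj (ep S m) * ep S m) * of_real (cc \<sigma>j \<kappa>1 m * cc \<sigma>j \<kappa>2 m)"
        using jk by (simp add: F_def \<alpha>_def \<beta>_def \<sigma>j_def \<sigma>k_def Jj_def Jk_def)
      also have "\<dots> = of_real (cc \<sigma>j \<kappa>s m)" unfolding ep_sq cc_add kk by simp
      finally show ?thesis .
    qed
    then show ?thesis unfolding TH_def by simp
  qed
  have E2: "of_real s * (\<Sum>\<^sub>\<infinity>m. F (m, 1 - m)) = TH" if nA: "R \<noteq> RA" and p1: "P1"
  proof -
    have jk: "j = k" "j = 1" and RR: "R = RB \<or> R = RBv \<or> R = RD" using P1R[OF nA] p1 by auto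
    have J0: "Jj = 0" "Jk = 0" using jk RR by (auto simp: Jj_def Jk_def)
    have SS: "S = SB \<or> S = SD" using RR by (auto simp: S_def)
    have "of_real s * F (m, 1 - m) = of_real (cc \<sigma>j \<kappa>s m)" for m
    proof -
      have "of_real s * F (m, 1 - m) = (of_real (sv S) * (cnj (ep S m) * ep S (1 - m))) * of_real (cc 0 \<kappa>1 m * cc 0 \<kappa>2 (1 - m))"
        by (simp add: F_def \<alpha>_def \<beta>_def \<sigma>j_def \<sigma>k_def J0 s_def)
      also have "\<dots> = of_real (cc \<sigma>j \<kappa>s m)" unfolding ep_anti[OF SS] cc_refl0 cc_add kk
        by (simp add: \<sigma>j_def J0)
      finally show ?thesis .
    qed
    then show ?thesis unfolding TH_def infsum_cmult_right'[symmetric] by simp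
  qed
  have E3: "of_real s * (\<Sum>\<^sub>\<infinity>m. F (m, - m)) = TH" if nA: "R \<noteq> RA" and p2: "P2"
  proof -
    have jk: "j = k" "j = N" and RR: "R = RD" using P2R[OF nA] p2 by auto
    have sj: "\<sigma>j = 1/2" "\<sigma>k = 1/2" using jk RR ND n0
      by (auto simp: \<sigma>j_def \<sigma>k_def Jj_def Jk_def n_def)
    have "of_real s * F (m, - m) = of_real (cc \<sigma>j \<kappa>s m)" for m
    proof -
      have "of_real s * F (m, - m) = of_real (cc (1/2) \<kappa>1 m * cc (1/2) \<kappa>2 (- m))"
        using RR by (simp add: F_def \<alpha>_def \<beta>_def sj s_def S_def ep_def)
      also have "\<dots> = of_real (cc \<sigma>j \<kappa>s m)" unfolding cc_refl1 cc_add kk sj ..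
      finally show ?thesis .
    qed
    then show ?thesis unfolding TH_def infsum_cmult_right'[symmetric] by simp
  qed
  have gen: "theta2 (of_real (n * Jj) * tauf r ts) ((of_real n)^2 * tauf r ts) = TH"
  proof -
    have 1: "of_real (n * Jj) * tauf r ts = of_real \<sigma>j * (\<i> * of_real \<kappa>s)"
      using n0 r by (simp add: tauf_def \<sigma>j_def \<kappa>s_def field_simps power2_eq_square)
    have 2: "(of_real n)^2 * tauf r ts = \<i> * of_real \<kappa>s"
      by (simp add: tauf_def \<kappa>s_def)
    show ?thesis unfolding 1 2 TH_def by (rule theta2_sum[OF ksp])
  qed
  have MC: "mconst R N r j ts = (if (R \<in> {RB, RBv, RD} \<and> j = 1) \<or> (R = RD \<and> j = N) then 4 * pi * r * TH else 2 * pi * r * TH)"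
  proof -
    have "mconst R N r j ts = (if R \<in> {RB, RBv, RD} \<and> j = 1 then 4 * pi * r * theta2 0 ((of_real n)^2 * tauf r ts)
         else if R = RD \<and> j = N then 4 * pi * r * theta2 (of_real (n * (real N - 1)) * tauf r ts) ((of_real n)^2 * tauf r ts)
         else 2 * pi * r * theta2 (of_real (n * Jj) * tauf r ts) ((of_real n)^2 * tauf r ts))"
      unfolding mconst_def Let_def n_def Jj_def ..
    moreover have "R \<in> {RB, RBv, RD} \<and> j = 1 \<Longrightarrow> theta2 0 ((of_real n)^2 * tauf r ts) = TH"
      using gen by (auto simp: Jj_def)
    moreover have "R = RD \<and> j = N \<Longrightarrow> theta2 (of_real (n * (real N - 1)) * tauf r ts) ((of_real n)^2 * tauf r ts) = TH"
      using gen by (auto simp: Jj_def)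
    ultimately show ?thesis using gen by auto
  qed
  show ?thesis
  proof (cases "R = RA")
    case True
    show ?thesis unfolding I Ssum MC using True sA[OF True] E1 by auto
  next
    case False
    have "of_real s * ((if P1 then (\<Sum>\<^sub>\<infinity>m. F (m, 1 - m)) else 0) + (if P2 then (\<Sum>\<^sub>\<infinity>m. F (m, - m)) else 0))
        = (if P1 then TH else 0) + (if P2 then TH else 0)"
      using E2[OF False] E3[OF False] by (auto simp: distrib_left)
    then have Ssum': "(\<Sum>\<^sub>\<infinity>p. F p * G p) = 2 * pi * r * (if j = k then TH else 0) + 2 * pi * r * ((if P1 then TH else 0) + (if P2 then TH else 0))"
      unfolding Ssum using E1 by (simp add: mult.assoc)
    show ?thesis unfolding I Ssum' MC using P1R[OF False] P2R[OF False] ND N1 by (auto simp: algebra_simps)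
  qed
qed

end
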